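(* Let $k:\mathbb{R}\to\mathbb{R}$ be a nonnegative kernel that is symmetric, i.e. $k(-z)=k(z)$ for all $z$, with $E(k(\epsilon_1))<\infty$ and $E(|\epsilon_1|^2 k^r(\epsilon_1))<\infty$ for $r=1,2$. Let $n\ge 2$, $m\in\mathbb{R}$, and let $Y_i=m+\epsilon_i$, $i=1,\dots,n$, where $\epsilon_1,\dots,\epsilon_n$ are i.i.d., symmetrically distributed around $0$ (i.e. $\epsilon_1\stackrel{d}{=}-\epsilon_1$) with finite second moment. For $i=1,\dots,n$ define the vertically weighted average \[ \widehat{\mu}_n(Y_i)=\frac{\sum_{j\ne i} Y_j\,k(Y_j-Y_i)}{\sum_{j\ne i} k(Y_j-Y_i)}, \] the sums running over $j\in\{1,\dots,n\}\setminus\{i\}$. Then $\mathrm{Med}(\widehat{\mu}_n(Y_i))=m$ for every $i=1,\dots,n$.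
   Context: $\mathrm{Med}$ denotes the median of a random variable; $\stackrel{d}{=}$ denotes equality in distribution. In particular $\widehat{\mu}_n(Y_n)=\sum_{j\le n-1}Y_j k(Y_j-Y_n)/\sum_{j\le n-1}k(Y_j-Y_n)$.
   Formalization: Every denominator $\sum_{j\ne i} k(Y_j-Y_i)$ is almost surely nonzero, and $\mathrm{Med}(\widehat{\mu}_n(Y_i))=m$ means that m is a median: $P(\widehat{\mu}_n(Y_i)\le m)\ge 1/2$ and $P(\widehat{\mu}_n(Y_i)\ge m)\ge 1/2$. Apart from conventions, each condition added here is assumed in the paper as well or is needed for the statement above to hold. *)

theory Defs
  imports "HOL-Probability.Probability"
begin

definition is_median :: "'a measure \<Rightarrow> ('a \<Rightarrow> real) \<Rightarrow> real \<Rightarrow> bool" where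
  "is_median M X c \<longleftrightarrow>
     measure M {\<omega> \<in> space M. X \<omega> \<le> c} \<ge> 1/2 \<and>
     measure M {\<omega> \<in> space M. X \<omega> \<ge> c} \<ge> 1/2"

definition vwa :: "(real \<Rightarrow> real) \<Rightarrow> (nat \<Rightarrow> 'a \<Rightarrow> real) \<Rightarrow> nat \<Rightarrow> nat \<Rightarrow> 'a \<Rightarrow> real" where
  "vwa k Y n i \<omega> =
     (\<Sum>j\<in>{1..n}-{i}. Y j \<omega> * k (Y j \<omega> - Y i \<omega>)) /
     (\<Sum>j\<in>{1..n}-{i}. k (Y j \<omega> - Y i \<omega>))"

end

theory Submission
  imports Defs
begin

theorem theorem2:
  fixes M :: "'a measure" and eps :: "nat \<Rightarrow> 'a \<Rightarrow> real" and k :: "real \<Rightarrow> real"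
    and n :: nat and m :: real
  assumes "prob_space M"
    and "n \<ge> 2"
    and k_meas: "k \<in> borel_measurable borel"
    and k_nonneg: "\<And>z. k z \<ge> 0"
    and k_sym: "\<And>z. k (- z) = k z"
    and rv: "\<And>i. i \<in> {1..n} \<Longrightarrow> eps i \<in> borel_measurable M"
    and indep: "prob_space.indep_vars M (\<lambda>_. borel) eps {1..n}"
    and ident: "\<And>i. i \<in> {1..n} \<Longrightarrow> distr M borel (eps i) = distr M borel (eps 1)"
    and symm: "distr M borel (\<lambda>\<omega>. - eps 1 \<omega>) = distr M borel (eps 1)"
    and second_moment: "integrable M (\<lambda>\<omega>. (eps 1 \<omega>)^2)"
    and k_int: "integrable M (\<lambda>\<omega>. k (eps 1 \<omega>))"
    and k_mom1: "integrable M (\<lambda>\<omega>. \<bar>eps 1 \<omega>\<bar>^2 * k (eps 1 \<omega>))"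
    and k_mom2: "integrable M (\<lambda>\<omega>. \<bar>eps 1 \<omega>\<bar>^2 * (k (eps 1 \<omega>))^2)"
    and denom_pos: "AE \<omega> in M. \<forall>i\<in>{1..n}.
          (\<Sum>j\<in>{1..n}-{i}. k ((m + eps j \<omega>) - (m + eps i \<omega>))) \<noteq> 0"
  shows "\<forall>i\<in>{1..n}. is_median M (vwa k (\<lambda>j \<omega>. m + eps j \<omega>) n i) m"
proof
  fix i assume iI: "i \<in> {1..n}"
  interpret P: prob_space M by fact
  define I where "I = {1..n::nat}"
  have Ine: "I \<noteq> {}" using assms(2) by (auto simp: I_def)
  have rvI: "\<And>j. j \<in> I \<Longrightarrow> eps j \<in> borel_measurable M" using rv by (simp add: I_def)
  have rvN: "\<And>j. j \<in> I \<Longrightarrow> (\<lambda>\<omega>. - eps j \<omega>) \<in> borel_measurable M" using rvI by measurable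
  have iII: "i \<in> I" using iI by (simp add: I_def)
  note k_meas[measurable] rv[measurable]
  define g where "g = (\<lambda>x::nat\<Rightarrow>real. (\<Sum>j\<in>I-{i}. x j * k (x j - x i)) / (\<Sum>j\<in>I-{i}. k (x j - x i)))"
  have gm: "g \<in> borel_measurable (PiM I (\<lambda>_. borel))"
    unfolding g_def using iII by measurable
  define X where "X = (\<lambda>\<omega>. \<lambda>j\<in>I. eps j \<omega>)"
  define NX where "NX = (\<lambda>\<omega>. \<lambda>j\<in>I. - eps j \<omega>)"
  define D where "D = (\<lambda>\<omega>. g (X \<omega>))"
  have XM: "X \<in> measurable M (PiM I (\<lambda>_. borel))"
    unfolding X_def using rvI by (auto intro!: measurable_restrict)
  have NXM: "NX \<in> measurable M (PiM I (\<lambda>_. borel))"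
    unfolding NX_def using rvN by (auto intro!: measurable_restrict)
  have DM: "D \<in> borel_measurable M" unfolding D_def using gm XM by measurable
  have gNX: "g (NX \<omega>) = - D \<omega>" for \<omega>
  proof -
    have 1: "(\<Sum>j\<in>I-{i}. NX \<omega> j * k (NX \<omega> j - NX \<omega> i)) = - (\<Sum>j\<in>I-{i}. X \<omega> j * k (X \<omega> j - X \<omega> i))"
      unfolding sum_negf[symmetric]
    proof (rule sum.cong)
      fix j assume "j \<in> I - {i}"
      then show "NX \<omega> j * k (NX \<omega> j - NX \<omega> i) = - (X \<omega> j * k (X \<omega> j - X \<omega> i))"
        using iI k_sym[of "eps j \<omega> - eps i \<omega>"] by (simp add: NX_def X_def I_def)
    qed simp
    have 2: "(\<Sum>j\<in>I-{i}. k (NX \<omega> j - NX \<omega> i)) = (\<Sum>j\<in>I-{i}. k (X \<omega> j - X \<omega> i))"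
    proof (rule sum.cong)
      fix j assume "j \<in> I - {i}"
      then show "k (NX \<omega> j - NX \<omega> i) = k (X \<omega> j - X \<omega> i)"
        using iI k_sym[of "eps j \<omega> - eps i \<omega>"] by (simp add: NX_def X_def I_def)
    qed simp
    show ?thesis unfolding D_def g_def 1 2 by simp
  qed
  have distX: "distr M (PiM I (\<lambda>_. borel)) X = PiM I (\<lambda>j. distr M borel (eps j))"
    unfolding X_def using P.indep_vars_iff_distr_eq_PiM'[OF Ine, where M'="\<lambda>_. borel" and X=eps] rvI indep
    by (simp add: I_def)
  have indN: "P.indep_vars (\<lambda>_. borel) (\<lambda>j. uminus \<circ> eps j) I"
    using P.indep_vars_compose[OF indep[folded I_def], where Y="\<lambda>_. uminus" and N="\<lambda>_. borel"] by simp
  have distNX: "distr M (PiM I (\<lambda>_. borel)) NX = PiM I (\<lambda>j. distr M borel (uminus \<circ> eps j))"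
    unfolding NX_def using P.indep_vars_iff_distr_eq_PiM'[OF Ine, where M'="\<lambda>_. borel" and X="\<lambda>j. uminus \<circ> eps j"] rvN indN
    by (simp add: o_def)
  have um: "(uminus::real\<Rightarrow>real) \<in> borel_measurable borel" by simp
  have same: "distr M borel (uminus \<circ> eps j) = distr M borel (eps j)" if "j \<in> I" for j
  proof -
    have ej: "distr M borel (eps j) = distr M borel (eps 1)" using ident that unfolding I_def by blast
    have "distr M borel (uminus \<circ> eps j) = distr (distr M borel (eps j)) borel uminus"
      using distr_distr[OF um rvI[OF that]] by simp
    also have "\<dots> = distr (distr M borel (eps 1)) borel uminus" by (simp only: ej)
    also have "\<dots> = distr M borel (uminus \<circ> eps 1)"
      using distr_distr[OF um rv[of 1]] assms(2) by simp
    also have "\<dots> = distr M borel (eps 1)" using symm by (simp add: o_def)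
    also have "\<dots> = distr M borel (eps j)" by (simp only: ej)
    finally show ?thesis .
  qed
  have eqd: "distr M (PiM I (\<lambda>_. borel)) NX = distr M (PiM I (\<lambda>_. borel)) X"
    unfolding distX distNX by (rule PiM_cong) (auto simp: same)
  let ?S = "{x \<in> space (PiM I (\<lambda>_. borel)). g x \<le> 0}"
  have Ssets: "?S \<in> sets (PiM I (\<lambda>_. borel))" using gm by measurable
  have le_ge: "measure M {\<omega>\<in>space M. D \<omega> \<le> 0} = measure M {\<omega>\<in>space M. D \<omega> \<ge> 0}"
  proof -
    have "measure M {\<omega>\<in>space M. D \<omega> \<le> 0} = measure M (X -` ?S \<inter> space M)"
      using XM by (intro arg_cong[where f="measure M"]) (auto simp: D_def measurable_space)
    also have "\<dots> = measure (distr M (PiM I (\<lambda>_. borel)) X) ?S"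
      using XM Ssets by (simp add: measure_distr)
    also have "\<dots> = measure (distr M (PiM I (\<lambda>_. borel)) NX) ?S" by (simp add: eqd)
    also have "\<dots> = measure M (NX -` ?S \<inter> space M)"
      using NXM Ssets by (simp add: measure_distr)
    also have "\<dots> = measure M {\<omega>\<in>space M. D \<omega> \<ge> 0}"
      using NXM by (intro arg_cong[where f="measure M"]) (auto simp: gNX measurable_space)
    finally show ?thesis .
  qed
  have sum1: "measure M {\<omega>\<in>space M. D \<omega> \<le> 0} + measure M {\<omega>\<in>space M. D \<omega> \<ge> 0} \<ge> 1"
  proof -
    have "1 = measure M ({\<omega>\<in>space M. D \<omega> \<le> 0} \<union> {\<omega>\<in>space M. D \<omega> \<ge> 0})"
      by (subst P.prob_space[symmetric]) (auto intro!: arg_cong[where f="measure M"])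
    also have "\<dots> \<le> measure M {\<omega>\<in>space M. D \<omega> \<le> 0} + measure M {\<omega>\<in>space M. D \<omega> \<ge> 0}"
      using DM by (intro measure_subadditive) auto
    finally show ?thesis by simp
  qed
  define V where "V = vwa k (\<lambda>j \<omega>. m + eps j \<omega>) n i"
  have VD: "AE \<omega> in M. V \<omega> = m + D \<omega>"
    using denom_pos
  proof eventually_elim
    case (elim \<omega>)
    let ?d = "\<Sum>j\<in>I-{i}. k (eps j \<omega> - eps i \<omega>)"
    have dne: "?d \<noteq> 0" using elim iI by (simp add: I_def)
    have num: "(\<Sum>j\<in>I-{i}. (m + eps j \<omega>) * k (eps j \<omega> - eps i \<omega>)) = m * ?d + (\<Sum>j\<in>I-{i}. eps j \<omega> * k (eps j \<omega> - eps i \<omega>))"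
      by (simp add: distrib_right sum.distrib sum_distrib_left)
    have "D \<omega> = (\<Sum>j\<in>I-{i}. eps j \<omega> * k (eps j \<omega> - eps i \<omega>)) / ?d"
      unfolding D_def g_def X_def using iI by (simp add: I_def)
    moreover have "V \<omega> = (\<Sum>j\<in>I-{i}. (m + eps j \<omega>) * k (eps j \<omega> - eps i \<omega>)) / ?d"
      unfolding V_def vwa_def by (simp add: I_def)
    ultimately show ?case using dne unfolding num by (simp add: add_divide_distrib)
  qed
  have VM: "V \<in> borel_measurable M"
    unfolding V_def vwa_def using iI by measurable
  have m1: "measure M {\<omega>\<in>space M. V \<omega> \<le> m} = measure M {\<omega>\<in>space M. D \<omega> \<le> 0}"
    using VD VM DM by (intro measure_eq_AE) auto
  have m2: "measure M {\<omega>\<in>space M. V \<omega> \<ge> m} = measure M {\<omega>\<in>space M. D \<omega> \<ge> 0}"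
    using VD VM DM by (intro measure_eq_AE) auto
  show "is_median M (vwa k (\<lambda>j \<omega>. m + eps j \<omega>) n i) m"
    unfolding is_median_def V_def[symmetric] m1 m2 using le_ge sum1 by linarith
qed

end
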